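(* Let $m$ be a positive integer, $n=2m$, let $r$ be a positive divisor of $2^m+1$, $s$ an integer, $a\in\mathbb{F}_{2^n}^*$, and define $f:\mathbb{F}_{2^n}\to\mathbb{F}_2$ by $f(0)=0$ and $$f(x)=\sum_{i=1}^{\frac{2^m+1}{r}-1}{\rm Tr}_1^n\big(ax^{(ri+s)(2^m-1)}\big).$$ (1) If $\gcd(s,2^m+1)=1$ and $a=\overline{a}\xi^k$ with $\overline{a}\in\mathbb{F}_{2^m}^*$ and $0\le k\le 2^m$, then $f$ is bent if and only if $$K_m(\overline{a})=r-\sum_{x\in U,\,x^r=1}(-1)^{{\rm Tr}_1^n(ax)}.$$ (2) If $\gcd(s,2^m+1)=d$ and $a=\overline{a}\xi^{kd}$ with $\overline{a}\in\mathbb{F}_{2^m}^*$ and $0\le k<\frac{2^m+1}{d}$, then $f$ is bent if and only if $$d\,S_0(\overline{a})=\sum_{x\in U,\,x^r=1}(-1)^{{\rm Tr}_1^n(ax^s)}+1-r,$$ where $S_0(\overline{a})=\sum_{x\in V_0}(-1)^{{\rm Tr}_1^n(\overline{a}x)}$ and $V_0=\{\xi^{dj}:0\le j<\frac{2^m+1}{d}\}$.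
   Context: ${\rm Tr}_k^t$ is the trace map from $\mathbb{F}_{2^t}$ to $\mathbb{F}_{2^k}$. $U=\{x\in\mathbb{F}_{2^n}:x^{2^m+1}=1\}$ and $\xi$ is a fixed generator of $U$. $K_m(\beta)=\sum_{x\in\mathbb{F}_{2^m}}(-1)^{{\rm Tr}_1^m(\beta x+x^{2^m-2})}$. A function $f:\mathbb{F}_{2^n}\to\mathbb{F}_2$ is bent if $|W_f(\lambda)|^2=2^n$ for all $\lambda$, where $W_f(\lambda)=\sum_{x}(-1)^{f(x)+{\rm Tr}_1^n(\lambda x)}$. *)

theory Defs
  imports Complex_Main
begin

text \<open>Absolute trace Tr_1^t (values in the prime field {0,1} when the argument lies in F_{2^t}).\<close>
definition tr :: "nat \<Rightarrow> 'a::field \<Rightarrow> 'a" where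
  "tr t x = (\<Sum>i<t. x ^ (2 ^ i))"

text \<open>Additive character: (-1)^y for y in F_2 (embedded as 0/1 in the field).\<close>
definition chi :: "'a::field \<Rightarrow> int" where
  "chi y = (if y = 0 then 1 else -1)"

definition subF :: "nat \<Rightarrow> 'a::field set" where
  "subF m = {x. x ^ (2 ^ m) = x}"

definition unitU :: "nat \<Rightarrow> 'a::field set" where
  "unitU m = {x. x ^ (2 ^ m + 1) = 1}"

text \<open>Kloosterman sum K_m(beta); x^(2^m-2) is the inversion map (0 maps to 0).\<close>
definition kloosterman :: "nat \<Rightarrow> 'a::{field,finite} \<Rightarrow> int" where
  "kloosterman m \<beta> = (\<Sum>x\<in>subF m. chi (tr m (\<beta> * x + inverse x)))"

definition walsh :: "nat \<Rightarrow> ('a::{field,finite} \<Rightarrow> 'a) \<Rightarrow> 'a \<Rightarrow> int" where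
  "walsh n f lam = (\<Sum>x\<in>UNIV. chi (f x + tr n (lam * x)))"

definition bent :: "nat \<Rightarrow> ('a::{field,finite} \<Rightarrow> 'a) \<Rightarrow> bool" where
  "bent n f \<longleftrightarrow> (\<forall>lam. \<bar>walsh n f lam\<bar> ^ 2 = 2 ^ n)"

definition fun_f :: "nat \<Rightarrow> nat \<Rightarrow> int \<Rightarrow> 'a::field \<Rightarrow> 'a \<Rightarrow> 'a" where
  "fun_f m r s a x = (if x = 0 then 0 else
     (\<Sum>i=1..(2 ^ m + 1) div r - 1.
        tr (2 * m) (a * x powi ((int r * int i + s) * (2 ^ m - 1)))))"

end

theory Submission
  imports Defs "HOL-Computational_Algebra.Polynomial"
begin

locale ff =
  fixes m :: nat and \<xi> :: "'a::{field,finite}"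
  assumes m_pos: "m > 0" and card_UNIV: "card (UNIV::'a set) = 2^(2*m)"
    and xi_U: "\<xi> \<in> unitU m" and xi_gen: "\<forall>x\<in>unitU m. \<exists>j::nat. x = \<xi>^j"
begin

lemma two_zero: "(2::'a) = 0"
proof -
  have "(\<Sum>x\<in>UNIV. x + 1) = (\<Sum>x\<in>UNIV. (x::'a))"
    by (rule sum.reindex_bij_witness[of _ "\<lambda>x. x - 1" "\<lambda>x. x+1"]) auto
  hence "of_nat (card (UNIV::'a set)) * (1::'a) = 0" by (simp add: sum.distrib)
  hence "(2::'a)^(2*m) = 0" using card_UNIV by simp
  thus ?thesis by simp
qed

lemma add_self[simp]: "(x::'a) + x = 0"
  by (metis mult_2 two_zero mult_zero_left)

lemma minus_eq[simp]: "- (x::'a) = x"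
  by (metis add_self add_right_cancel neg_eq_iff_add_eq_0)

lemma diff_eq_add: "(x::'a) - y = x + y"
  by (metis minus_eq diff_conv_add_uminus)

lemma sq_add: "((x::'a) + y)^2 = x^2 + y^2"
proof -
  have "(x+y)^2 = x^2 + y^2 + 2*x*y" by (simp add: power2_eq_square algebra_simps)
  thus ?thesis by (simp add: two_zero)
qed

lemma pow2k_add: "((x::'a) + y)^(2^k) = x^(2^k) + y^(2^k)"
proof (induction k)
  case 0 then show ?case by simp
next
  case (Suc k)
  have "(x+y)^(2^Suc k) = ((x+y)^(2^k))^2" by (simp add: power_mult[symmetric] mult.commute)
  also have "\<dots> = (x^(2^k))^2 + (y^(2^k))^2" by (simp add: Suc sq_add)
  also have "\<dots> = x^(2^Suc k) + y^(2^Suc k)" by (simp add: power_mult[symmetric] mult.commute)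
  finally show ?case .
qed

lemma sum_pow2k: "finite I \<Longrightarrow> (\<Sum>i\<in>I. f i)^(2^k) = (\<Sum>i\<in>I. (f i::'a)^(2^k))"
  by (induction I rule: finite_induct) (simp_all add: pow2k_add)

lemma fermat: "(x::'a)^(2^(2*m)) = x"
proof (cases "x = 0")
  case True then show ?thesis by simp
next
  case False
  let ?A = "UNIV - {0::'a}"
  have "(\<Prod>y\<in>?A. x * y) = (\<Prod>y\<in>?A. y)"
    by (rule prod.reindex_bij_witness[of _ "\<lambda>y. y / x" "\<lambda>y. x * y"]) (use False in auto)
  hence "x ^ card ?A * (\<Prod>y\<in>?A. y) = (\<Prod>y\<in>?A. y)" by (simp add: prod.distrib)
  moreover have "(\<Prod>y\<in>?A. y) \<noteq> 0" by simp
  ultimately have "x ^ card ?A = 1" by simp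
  moreover have "card ?A = 2^(2*m) - 1" using card_UNIV by (simp add: card_Diff_singleton)
  ultimately have "x^(2^(2*m) - 1) = 1" by simp
  hence "x * x^(2^(2*m) - 1) = x" by simp
  thus ?thesis by (simp add: power_Suc[symmetric])
qed

abbreviation q :: nat where "q \<equiv> 2^m"

lemma q_ge2: "q \<ge> 2"
proof -
  have "(2::nat)^1 \<le> 2^m" by (rule power_increasing) (use m_pos in auto)
  thus ?thesis by simp
qed

lemma qq: "2^(2*m) = q*q" by (simp add: power_mult[symmetric] mult.commute power2_eq_square[symmetric] power_even_eq)

lemma fermat2: "(x::'a)^(q*q) = x" using fermat qq by metis

lemma frob_q: "((x::'a) + y)^q = x^q + y^q" by (rule pow2k_add)

lemma sub_eq_add: "(x::'a) = y \<longleftrightarrow> x + y = 0"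
  by (metis add_self add.assoc add_0_left add.commute)

lemma F_iff: "x \<in> subF m \<longleftrightarrow> (x::'a)^q = x" by (simp add: subF_def)
lemma U_iff: "x \<in> unitU m \<longleftrightarrow> (x::'a)^(q+1) = 1" by (simp add: unitU_def)

lemma F_add: "x \<in> subF m \<Longrightarrow> y \<in> subF m \<Longrightarrow> (x::'a) + y \<in> subF m"
  by (simp add: F_iff frob_q)
lemma F_mult: "x \<in> subF m \<Longrightarrow> y \<in> subF m \<Longrightarrow> (x::'a) * y \<in> subF m"
  by (simp add: F_iff power_mult_distrib)
lemma F_inverse: "x \<in> subF m \<Longrightarrow> inverse (x::'a) \<in> subF m"
  by (simp add: F_iff power_inverse)
lemma F_0: "(0::'a) \<in> subF m" using q_ge2 by (simp add: F_iff)
lemma F_1: "(1::'a) \<in> subF m" by (simp add: F_iff)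
lemma F_trace: "(x::'a) + x^q \<in> subF m"
  by (simp add: F_iff frob_q power_mult[symmetric] fermat2 add.commute)
lemma F_norm: "(x::'a) * x^q \<in> subF m"
  by (simp add: F_iff power_mult_distrib power_mult[symmetric] fermat2 mult.commute)

lemma U_nz: "u \<in> unitU m \<Longrightarrow> (u::'a) \<noteq> 0" by (auto simp: U_iff)
lemma U_conj: "u \<in> unitU m \<Longrightarrow> (u::'a)^q = inverse u"
  using U_nz[of u] by (simp add: U_iff field_simps)
lemma U_mult: "u \<in> unitU m \<Longrightarrow> v \<in> unitU m \<Longrightarrow> (u::'a) * v \<in> unitU m"
  unfolding U_iff power_mult_distrib by simp
lemma U_inverse: "u \<in> unitU m \<Longrightarrow> inverse (u::'a) \<in> unitU m"
  by (metis U_iff inverse_1 power_inverse)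
lemma U_1: "(1::'a) \<in> unitU m" by (simp add: U_iff)
lemma U_power: "u \<in> unitU m \<Longrightarrow> (u::'a)^k \<in> unitU m"
  by (metis U_iff power_mult mult.commute power_one)

lemma sq_eq_one: "(y::'a)^2 = 1 \<Longrightarrow> y = 1"
proof -
  assume "y^2 = 1"
  hence "(y+1)^2 = 1 + 1" by (simp only: sq_add power_one)
  hence "(y+1)^2 = 0" by (simp only: add_self)
  hence "y + 1 = 0" by simp
  thus "y = 1" by (rule sub_eq_add[THEN iffD2])
qed

lemma F_U: "y \<in> subF m \<Longrightarrow> y \<in> unitU m \<Longrightarrow> (y::'a) = 1"
proof -
  assume a: "y \<in> subF m" "y \<in> unitU m"
  have "y^(Suc q) = y^q * y" by (rule power_Suc2)
  hence "y^(Suc q) = y^2" using a(1) by (simp only: F_iff power2_eq_square)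
  moreover have "y^(Suc q) = 1" using a(2) by (simp add: U_iff)
  ultimately show ?thesis using sq_eq_one by simp
qed

lemma idem: "(z::'a)^2 = z \<Longrightarrow> z = 0 \<or> z = 1"
  by (simp add: power2_eq_square)

lemma sum_double: "(\<Sum>i<(n::nat)+n. f i) = (\<Sum>i<n. f i) + (\<Sum>i<n. (f (n+i)::'b::comm_monoid_add))"
proof -
  have e1: "{..<n+n} = {0..<n+n}" "{..<n} = {0..<n}" by auto
  have "sum f {0..<n+n} = sum f {0..<n} + sum f {n..<n+n}"
    by (rule sum.atLeastLessThan_concat[symmetric]) auto
  moreover have "sum f {n..<n+n} = (\<Sum>i\<in>{0..<n}. f (i+n))"
    using sum.shift_bounds_nat_ivl[of f 0 n n] by simp
  ultimately show ?thesis unfolding e1 by (simp add: add.commute)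
qed

lemma sum_shift_pow: "(\<Sum>i<n. (g::nat\<Rightarrow>'a) (Suc i)) + g 0 = (\<Sum>i<n. g i) + g n"
  using sum.lessThan_Suc_shift[of g n] sum.lessThan_Suc[of g n] by (simp add: add.commute)

lemma tr_sq: "(tr n (x::'a))^2 = tr n (x^2)"
  unfolding tr_def using sum_pow2k[of "{..<n}" "\<lambda>i. x^(2^i)" 1]
  by (simp add: power_mult[symmetric] mult.commute)

lemma tr_sq': "(tr n (x::'a))^2 + tr n x = x^(2^n) + x"
proof -
  have "(tr n x)^2 = (\<Sum>i<n. x^(2^(Suc i)))"
    unfolding tr_def using sum_pow2k[of "{..<n}" "\<lambda>i. x^(2^i)" 1]
    by (simp add: power_mult[symmetric] mult.commute)
  hence "(tr n x)^2 + x = tr n x + x^(2^n)"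
    using sum_shift_pow[of "\<lambda>i. x^(2^i)" n] by (simp add: tr_def)
  hence "((tr n x)^2 + x) + (x + tr n x) = (tr n x + x^(2^n)) + (x + tr n x)" by simp
  moreover have "((tr n x)^2 + x) + (x + tr n x) = (tr n x)^2 + tr n x + (x + x)" by (simp only: ac_simps)
  moreover have "(tr n x + x^(2^n)) + (x + tr n x) = x^(2^n) + x + (tr n x + tr n x)" by (simp only: ac_simps)
  ultimately show ?thesis by simp
qed

lemma tr_idem: "(x::'a)^(2^n) = x \<Longrightarrow> tr n x = 0 \<or> tr n x = 1"
proof -
  assume "x^(2^n) = x"
  hence "(tr n x)^2 + tr n x = 0" using tr_sq'[of n x] by simp
  hence "(tr n x)^2 = tr n x" by (rule sub_eq_add[THEN iffD2])
  thus ?thesis by (rule idem)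
qed

lemma tr_add: "tr n ((x::'a) + y) = tr n x + tr n y"
  by (simp add: tr_def pow2k_add sum.distrib)

lemma tr_0[simp]: "tr n (0::'a) = 0" by (simp add: tr_def power_0_left)

lemma tr_sum: "finite I \<Longrightarrow> tr n (\<Sum>i\<in>I. f i) = (\<Sum>i\<in>I. tr n (f i::'a))"
  by (induction I rule: finite_induct) (simp_all add: tr_add)


lemma tr_full: "tr (2*m) (x::'a) = 0 \<or> tr (2*m) x = 1"
  by (rule tr_idem) (simp add: fermat)

lemma tr_F: "x \<in> subF m \<Longrightarrow> tr m (x::'a) = 0 \<or> tr m x = 1"
  by (rule tr_idem) (simp add: F_iff)

lemma tr_split: assumes "y \<in> subF m" shows "tr (2*m) ((c::'a) * y) = tr m ((c + c^q) * y)"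
proof -
  have y: "y^q = y" using assms F_iff by simp
  have "\<And>i. (c*y)^(2^(m+i)) = (c^q*y)^(2^i)"
    by (simp add: power_add power_mult power_mult_distrib y)
  hence "tr (2*m) (c*y) = tr m (c*y) + tr m (c^q*y)"
    unfolding tr_def using sum_double[of "\<lambda>i. (c*y)^(2^i)" m] by (simp add: mult_2)
  thus ?thesis by (simp add: tr_add distrib_right)
qed

lemma tr_telescope: "tr m ((w::'a)^2 + w) = w^q + w"
  using tr_sq'[of m w] tr_sq[of m w] by (simp add: tr_add)

lemma chi_0[simp]: "chi (0::'a) = 1" by (simp add: chi_def)
lemma chi_1[simp]: "chi (1::'a) = -1" by (simp add: chi_def)

lemma chi_add: "chi (a + b) = chi a * chi b" if "(a::'a) = 0 \<or> a = 1" "b = 0 \<or> b = 1"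
proof -
  have "chi ((1::'a) + 1) = 1" by (simp only: add_self chi_0)
  thus ?thesis using that by (elim disjE) (simp_all add: chi_def)
qed

lemma chi_plus1: "(a::'a) = 0 \<or> a = 1 \<Longrightarrow> chi (a + 1) = - chi a"
  by auto

lemma roots_card: "p \<noteq> 0 \<Longrightarrow> (\<And>x. P x \<longleftrightarrow> poly p (x::'a) = 0) \<Longrightarrow> card {x. P x} \<le> degree p"
  using card_poly_roots_bound[of p] by simp

lemma card_F_le: "card (subF m :: 'a set) \<le> q"
proof -
  let ?p = "monom (1::'a) q + monom 1 1"
  have d: "degree ?p = q"
    by (subst degree_add_eq_left) (use q_ge2 in \<open>simp_all add: degree_monom_eq\<close>)
  have "?p \<noteq> 0" using d q_ge2 by auto
  moreover have "x \<in> subF m \<longleftrightarrow> poly ?p (x::'a) = 0" for x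
    using sub_eq_add[of "x^q" x] by (simp add: poly_monom F_iff)
  ultimately have "card {x. x \<in> (subF m :: 'a set)} \<le> degree ?p" by (rule roots_card)
  thus ?thesis using d by simp
qed

lemma card_U_le: "card (unitU m :: 'a set) \<le> q + 1"
proof -
  let ?p = "monom (1::'a) (q+1) + monom 1 0"
  have d: "degree ?p = q + 1"
    by (subst degree_add_eq_left) (simp_all add: degree_monom_eq)
  have "?p \<noteq> 0" using d by auto
  moreover have "x \<in> unitU m \<longleftrightarrow> poly ?p (x::'a) = 0" for x
    using sub_eq_add[of "x^(q+1)" 1] by (simp add: poly_monom U_iff)
  ultimately have "card {x. x \<in> (unitU m :: 'a set)} \<le> degree ?p" by (rule roots_card)
  thus ?thesis using d by simp
qed

lemma q_half: obtains k where "q = 2*k + 2"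
proof -
  have "even q" using m_pos by simp
  then obtain h where "q = 2*h" by blast
  moreover have "h \<ge> 1" using q_ge2 \<open>q = 2*h\<close> by simp
  ultimately show ?thesis using that[of "h - 1"] by simp
qed

lemma fermat1: "(x::'a) \<noteq> 0 \<Longrightarrow> x^(q*q - 1) = 1"
proof -
  assume x: "x \<noteq> 0"
  have "q*q \<ge> 1" using q_ge2 by simp
  hence e: "Suc (q*q - 1) = q*q" by simp
  have "x * x^(q*q - 1) = x^(Suc (q*q - 1))" by (rule power_Suc[symmetric])
  hence "x * x^(q*q - 1) = x^(q*q)" by (simp only: e)
  hence "x * x^(q*q - 1) = x * 1" by (simp add: fermat2)
  thus ?thesis using x by simp
qed

lemma decomp: assumes "(x::'a) \<noteq> 0"
  shows "\<exists>y u. y \<in> subF m \<and> y \<noteq> 0 \<and> u \<in> unitU m \<and> x = y * u"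
proof -
  obtain k where k: "q = 2*k + 2" by (rule q_half)
  define e where "e = (2*k+1)*(k+1)"
  define u where "u = x^e"
  define y where "y = x * inverse u"
  have f1: "x^((2*k+1)*(2*k+3)) = 1"
  proof -
    have "q*q - 1 = (2*k+1)*(2*k+3)" using k by (simp add: algebra_simps)
    thus ?thesis using fermat1[OF assms] by simp
  qed
  have u0: "u \<noteq> 0" using assms by (simp add: u_def)
  have uU: "u \<in> unitU m"
  proof -
    have ee: "e*(q+1) = ((2*k+1)*(2*k+3))*(k+1)" by (simp add: e_def k algebra_simps)
    have "u^(q+1) = x^(e*(q+1))" unfolding u_def by (rule power_mult[symmetric])
    also have "\<dots> = (x^((2*k+1)*(2*k+3)))^(k+1)" by (simp only: ee power_mult)
    finally have "u^(q+1) = (x^((2*k+1)*(2*k+3)))^(k+1)" .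
    thus ?thesis using f1 by (simp add: U_iff)
  qed
  have ee2: "1 + e*q = (q + e) + ((2*k+1)*(2*k+3))*k" by (simp add: e_def k algebra_simps)
  have "x^(1 + e*q) = x^(q + e) * (x^((2*k+1)*(2*k+3)))^k"
    by (simp only: ee2 power_add power_mult)
  hence ex: "x^(1 + e*q) = x^(q + e)" using f1 by simp
  have "y^q = x^q * inverse (u^q)" by (simp add: y_def power_mult_distrib power_inverse)
  also have "\<dots> = y"
  proof -
    have "x^q * u = x * u^q" using ex by (simp add: u_def power_add power_mult mult.commute)
    thus ?thesis using u0 by (simp add: y_def field_simps)
  qed
  finally have "y \<in> subF m" by (simp add: F_iff)
  moreover have "y \<noteq> 0" using assms u0 by (simp add: y_def)
  moreover have "x = y * u" using u0 by (simp add: y_def)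
  ultimately show ?thesis using uU by blast
qed

lemma decomp_unique:
  assumes "y \<in> subF m" "y \<noteq> 0" "y' \<in> subF m" "y' \<noteq> 0" "u \<in> unitU m" "u' \<in> unitU m"
    and "(y::'a) * u = y' * u'"
  shows "y = y' \<and> u = u'"
proof -
  have u0: "u \<noteq> 0" "u' \<noteq> 0" using assms U_nz by auto
  have "y / y' = u' / u" using assms(2,4,7) u0 by (simp add: field_simps)
  moreover have "y / y' \<in> subF m" using assms by (simp add: divide_inverse F_mult F_inverse)
  moreover have "u' / u \<in> unitU m" using assms by (simp add: divide_inverse U_mult U_inverse)
  ultimately have "y / y' = 1" using F_U by metis
  thus ?thesis using assms(4,7) u0 by (simp add: field_simps)
qed

abbreviation Fs :: "'a set" where "Fs \<equiv> subF m - {0}"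

lemma polar_inj: "inj_on (\<lambda>(y,u). y * u) (Fs \<times> unitU m)"
  by (auto simp: inj_on_def dest: decomp_unique)

lemma polar_img: "(\<lambda>(y,u). y * u) ` (Fs \<times> unitU m) = UNIV - {0}"
proof
  show "(\<lambda>(y,u). y * u) ` (Fs \<times> unitU m) \<subseteq> UNIV - {0}" using U_nz by auto
  show "UNIV - {0} \<subseteq> (\<lambda>(y,u). y * u) ` (Fs \<times> unitU m)"
  proof
    fix x :: 'a assume "x \<in> UNIV - {0}"
    then obtain y u where "y \<in> subF m" "y \<noteq> 0" "u \<in> unitU m" "x = y * u" using decomp by blast
    thus "x \<in> (\<lambda>(y,u). y * u) ` (Fs \<times> unitU m)" by force
  qed
qed

lemma cards: "card (subF m :: 'a set) = q \<and> card (unitU m :: 'a set) = q + 1"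
proof -
  have "card (Fs \<times> (unitU m :: 'a set)) = card (UNIV - {0::'a})"
    using card_image[OF polar_inj] polar_img by simp
  hence e: "(card (subF m :: 'a set) - 1) * card (unitU m :: 'a set) = q*q - 1"
    using F_0 card_UNIV qq by (simp add: card_cartesian_product card_Diff_singleton)
  let ?a = "card (subF m :: 'a set) - 1" and ?b = "card (unitU m :: 'a set)"
  have a: "?a \<le> q - 1" using card_F_le by simp
  have b: "?b \<le> q + 1" by (rule card_U_le)
  have qq1: "q*q - 1 = (q-1)*(q+1)" using q_ge2 by (simp add: algebra_simps)
  have "?a * ?b \<le> ?a * (q+1)" using b by (rule mult_le_mono2)
  moreover have "?a * (q+1) \<le> (q-1)*(q+1)" using a by (rule mult_le_mono1)
  ultimately have "?a * (q+1) = (q-1)*(q+1)" using e qq1 by linarith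
  hence aa: "?a = q - 1" by (simp only: mult_cancel2) simp
  hence "?a * ?b = ?a * (q+1)" using e qq1 by simp
  moreover have "?a > 0" using aa q_ge2 by simp
  ultimately have "?b = q+1" by (simp only: mult_cancel1) simp
  moreover have "card (subF m :: 'a set) = q" using aa q_ge2 F_0 card_F_le by linarith
  ultimately show ?thesis by simp
qed

lemma card_F: "card (subF m :: 'a set) = q" using cards by simp
lemma card_U: "card (unitU m :: 'a set) = q + 1" using cards by simp
lemma card_Fs: "card Fs = q - 1" using card_F F_0 by (simp add: card_Diff_singleton)

lemma sum_polar: "(\<Sum>x\<in>UNIV. h x) = h 0 + (\<Sum>u\<in>unitU m. \<Sum>y\<in>Fs. (h (y * u) :: int))"
proof -
  have "(\<Sum>x\<in>UNIV. h x) = h 0 + (\<Sum>x\<in>UNIV - {0}. h x)"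
    by (simp add: sum.remove[of UNIV 0])
  also have "(\<Sum>x\<in>UNIV - {0}. h x) = (\<Sum>p\<in>Fs \<times> unitU m. h ((\<lambda>(y,u). y * u) p))"
    by (subst polar_img[symmetric], rule sum.reindex[OF polar_inj, unfolded comp_def])
  also have "\<dots> = (\<Sum>y\<in>Fs. \<Sum>u\<in>unitU m. h (y * u))"
    by (simp add: sum.cartesian_product split_def)
  also have "\<dots> = (\<Sum>u\<in>unitU m. \<Sum>y\<in>Fs. h (y * u))" by (rule sum.swap)
  finally show ?thesis .
qed

lemma tr_nonvanish: "\<exists>z\<in>subF m. tr m (z::'a) = 1"
proof (rule ccontr)
  assume "\<not> ?thesis"
  hence all0: "\<forall>z\<in>subF m. tr m (z::'a) = 0" using tr_F by blast
  let ?p = "\<Sum>i<m. monom (1::'a) (2^i)"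
  have pe: "poly ?p x = tr m x" for x by (simp add: poly_sum poly_monom tr_def)
  have dle: "degree ?p \<le> 2^(m-1)"
    by (rule degree_sum_le) (auto simp: degree_monom_eq intro: power_increasing)
  have "coeff ?p (2^(m-1)) = (\<Sum>i<m. if i = m - 1 then 1 else 0)"
    unfolding coeff_sum coeff_monom by (intro sum.cong) auto
  also have "\<dots> = 1" using m_pos by simp
  finally have "?p \<noteq> 0" by auto
  hence "card {x. poly ?p (x::'a) = 0} \<le> degree ?p" by (rule card_poly_roots_bound)
  moreover have "subF m \<subseteq> {x. poly ?p (x::'a) = 0}" using all0 pe by auto
  hence "card (subF m :: 'a set) \<le> card {x. poly ?p (x::'a) = 0}" by (intro card_mono) auto
  ultimately have "q \<le> 2^(m-1)" using dle card_F by linarith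
  moreover have "(2::nat)^(m-1) < 2^m" using m_pos by (intro power_strict_increasing) auto
  ultimately show False by linarith
qed

lemma char_sum_F: assumes "b \<in> subF m"
  shows "(\<Sum>y\<in>subF m. chi (tr m ((b::'a) * y))) = (if b = 0 then int q else 0)"
proof (cases "b = 0")
  case True thus ?thesis using card_F by simp
next
  case False
  obtain z :: 'a where z: "z \<in> subF m" "tr m z = 1" using tr_nonvanish by blast
  define w where "w = z / b"
  have wF: "w \<in> subF m" using z assms by (simp add: w_def divide_inverse F_mult F_inverse)
  have bw: "b * w = z" using False by (simp add: w_def)
  let ?S = "\<Sum>y\<in>subF m. chi (tr m (b * y))"
  have "?S = (\<Sum>y\<in>subF m. chi (tr m (b * (y + w))))"
    by (rule sum.reindex_bij_witness[of _ "\<lambda>y. y + w" "\<lambda>y. y + w"])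
       (auto simp: wF F_add add.assoc)
  also have "\<dots> = (\<Sum>y\<in>subF m. - chi (tr m (b * y)))"
  proof (rule sum.cong)
    fix y :: 'a assume "y \<in> subF m"
    hence "tr m (b*y) = 0 \<or> tr m (b*y) = 1" using assms by (intro tr_F F_mult)
    thus "chi (tr m (b * (y + w))) = - chi (tr m (b * y))"
      by (simp add: distrib_left tr_add bw z chi_plus1)
  qed simp
  also have "\<dots> = - ?S" by (simp add: sum_negf)
  finally show ?thesis using False by simp
qed

lemma tr_conj_zero: "((c::'a) + c^q = 0) \<longleftrightarrow> c \<in> subF m"
  using sub_eq_add[of "c^q" c] by (auto simp: F_iff add.commute)

lemma char_sum_Fs:
  "(\<Sum>y\<in>Fs. chi (tr (2*m) ((c::'a) * y))) = (if c \<in> subF m then int q - 1 else -1)"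
proof -
  have "(\<Sum>y\<in>Fs. chi (tr (2*m) (c * y))) = (\<Sum>y\<in>Fs. chi (tr m ((c + c^q) * y)))"
    by (intro sum.cong) (auto simp: tr_split)
  also have "\<dots> = (\<Sum>y\<in>subF m. chi (tr m ((c + c^q) * y))) - chi (tr m ((c + c^q) * 0))"
    using F_0 by (simp add: sum_diff1)
  also have "\<dots> = (if c + c^q = 0 then int q else 0) - 1"
    using char_sum_F[OF F_trace[of c]] by simp
  finally show ?thesis by (simp add: tr_conj_zero)
qed

lemma unique_line: assumes "(lam::'a) \<noteq> 0"
  shows "\<exists>u0\<in>unitU m. \<forall>u\<in>unitU m. (lam * u \<in> subF m) \<longleftrightarrow> u = u0"
proof -
  obtain y u where yu: "y \<in> subF m" "y \<noteq> 0" "u \<in> unitU m" "lam = y * u" using decomp[OF assms] by blast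
  have u0: "u \<noteq> 0" using yu U_nz by auto
  have "inverse u \<in> unitU m" using yu U_inverse by auto
  moreover have "\<forall>v\<in>unitU m. (lam * v \<in> subF m) \<longleftrightarrow> v = inverse u"
  proof
    fix v :: 'a assume v: "v \<in> unitU m"
    show "(lam * v \<in> subF m) \<longleftrightarrow> v = inverse u"
    proof
      assume "lam * v \<in> subF m"
      hence "lam * v * inverse y \<in> subF m" using yu by (simp add: F_mult F_inverse)
      moreover have "lam * v * inverse y = u * v" using yu by (simp add: field_simps)
      ultimately have "u * v = 1" using F_U U_mult yu(3) v by metis
      thus "v = inverse u" using u0 by (simp add: field_simps)
    next
      assume "v = inverse u"
      thus "lam * v \<in> subF m" using yu u0 by (simp add: mult.assoc)
    qed
  qed
  ultimately show ?thesis by blast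
qed

definition Sf :: "('a \<Rightarrow> 'a) \<Rightarrow> int" where "Sf f = (\<Sum>u\<in>unitU m. chi (f u))"

lemma walsh_formula:
  assumes f0: "f 0 = 0" and fhom: "\<And>y u. y \<in> Fs \<Longrightarrow> u \<in> unitU m \<Longrightarrow> f (y * u) = f u"
    and fval: "\<And>x. f x = 0 \<or> f x = (1::'a)"
  shows "walsh (2*m) f lam = 1 - Sf f + int q * (\<Sum>u\<in>unitU m. if lam * u \<in> subF m then chi (f u) else 0)"
proof -
  have "walsh (2*m) f lam = 1 + (\<Sum>u\<in>unitU m. \<Sum>y\<in>Fs. chi (f (y*u) + tr (2*m) (lam * (y*u))))"
    unfolding walsh_def by (subst sum_polar) (simp add: f0)
  also have "\<dots> = 1 + (\<Sum>u\<in>unitU m. chi (f u) * (\<Sum>y\<in>Fs. chi (tr (2*m) ((lam * u) * y))))"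
  proof (intro arg_cong2[where f="(+)"] refl sum.cong)
    fix u :: 'a assume u: "u \<in> unitU m"
    have "chi (f (y*u) + tr (2*m) (lam * (y*u))) = chi (f u) * chi (tr (2*m) ((lam * u) * y))"
      if y: "y \<in> Fs" for y
    proof -
      have e: "lam * (y*u) = (lam * u) * y" by (simp add: mult_ac)
      have "chi (f (y*u) + tr (2*m) (lam * (y*u))) = chi (f u + tr (2*m) ((lam * u) * y))"
        by (simp only: e fhom[OF y u])
      also have "\<dots> = chi (f u) * chi (tr (2*m) ((lam * u) * y))"
        by (rule chi_add[OF fval tr_full])
      finally show ?thesis .
    qed
    thus "(\<Sum>y\<in>Fs. chi (f (y*u) + tr (2*m) (lam * (y*u)))) = chi (f u) * (\<Sum>y\<in>Fs. chi (tr (2*m) ((lam * u) * y)))"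
      by (simp add: sum_distrib_left)
  qed
  also have "\<dots> = 1 + (\<Sum>u\<in>unitU m. chi (f u) * (if lam * u \<in> subF m then int q - 1 else -1))"
    by (simp add: char_sum_Fs)
  also have "\<dots> = 1 + (\<Sum>u\<in>unitU m. - chi (f u) + int q * (if lam * u \<in> subF m then chi (f u) else 0))"
    by (intro arg_cong2[where f="(+)"] refl sum.cong) (auto simp: algebra_simps)
  also have "\<dots> = 1 - Sf f + int q * (\<Sum>u\<in>unitU m. if lam * u \<in> subF m then chi (f u) else 0)"
    by (simp add: Sf_def sum.distrib sum_negf sum_distrib_left sum_subtractf)
  finally show ?thesis .
qed

lemma chi_abs: "\<bar>chi z\<bar> = 1" by (simp add: chi_def)
lemma chi_ge: "chi z \<ge> -1" by (simp add: chi_def)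

lemma Q2: "(int q)^2 = 2^(2*m)" by (simp add: power_mult[symmetric] mult.commute)

lemma bent_iff:
  assumes f0: "f 0 = 0" and fhom: "\<And>y u. y \<in> Fs \<Longrightarrow> u \<in> unitU m \<Longrightarrow> f (y * u) = f u"
    and fval: "\<And>x. f x = 0 \<or> f x = (1::'a)" and f1: "f 1 = 0"
  shows "bent (2*m) f \<longleftrightarrow> Sf f = 1"
proof -
  let ?Q = "int q" and ?S = "Sf f"
  note W = walsh_formula[OF f0 fhom fval]
  have W0: "walsh (2*m) f 0 = 1 - ?S + ?Q * ?S" using W[of 0] F_0 by (simp add: Sf_def)
  have Wl: "\<exists>u0. walsh (2*m) f lam = 1 - ?S + ?Q * chi (f u0)" if lam0: "lam \<noteq> 0" for lam
  proof -
    obtain u0 :: 'a where u0: "u0 \<in> unitU m" "\<forall>u\<in>unitU m. (lam * u \<in> subF m) \<longleftrightarrow> u = u0"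
      using unique_line[OF lam0] by blast
    have "(\<Sum>u\<in>unitU m. if lam * u \<in> subF m then chi (f u) else 0) = (\<Sum>u\<in>unitU m. if u = u0 then chi (f u) else 0)"
      using u0 by (intro sum.cong) auto
    also have "\<dots> = chi (f u0)" using u0 by simp
    finally show ?thesis using W[of lam] by auto
  qed
  have Qge: "?Q \<ge> 2" using q_ge2 by linarith
  have Sge: "?S \<ge> 1 - ?Q"
  proof -
    have "?S = chi (f 1) + (\<Sum>u\<in>unitU m - {1}. chi (f u))"
      unfolding Sf_def using U_1 by (simp add: sum.remove)
    moreover have "(\<Sum>u\<in>unitU m - {1}. chi (f u)) \<ge> (\<Sum>u\<in>unitU m - {1::'a}. -1)"
      by (rule sum_mono) (rule chi_ge)
    moreover have "(\<Sum>u\<in>unitU m - {1::'a}. (-1::int)) = - ?Q"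
      using card_U U_1 by (simp add: card_Diff_singleton)
    ultimately show ?thesis using f1 by simp
  qed
  show ?thesis
  proof
    assume "bent (2*m) f"
    hence "\<bar>walsh (2*m) f 0\<bar>^2 = ?Q^2" unfolding bent_def using Q2 by simp
    hence "\<bar>walsh (2*m) f 0\<bar> = ?Q" by (subst (asm) power2_eq_iff_nonneg) auto
    hence "1 + (?Q - 1) * ?S = ?Q \<or> 1 + (?Q - 1) * ?S = - ?Q" using W0 by (auto simp: algebra_simps abs_if split: if_splits)
    thus "?S = 1"
    proof
      assume "1 + (?Q - 1) * ?S = ?Q"
      hence "(?Q - 1) * (?S - 1) = 0" by (simp add: algebra_simps)
      thus "?S = 1" using Qge m_pos by simp
    next
      assume h: "1 + (?Q - 1) * ?S = - ?Q"
      show "?S = 1"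
      proof (cases "?S \<ge> -1")
        case True
        hence "(?Q - 1) * ?S \<ge> (?Q - 1) * (-1)" using Qge by (intro mult_left_mono) auto
        thus ?thesis using h by simp
      next
        case False
        hence "(?Q - 1) * ?S \<le> (?Q - 1) * (-2)" using Qge by (intro mult_left_mono) auto
        hence "?Q \<le> 3" using h by simp
        moreover have "even q" using m_pos by simp
        ultimately have "q = 2" using q_ge2 by presburger
        thus ?thesis using h Sge by simp
      qed
    qed
  next
    assume S1: "?S = 1"
    show "bent (2*m) f" unfolding bent_def
    proof
      fix lam :: 'a
      show "\<bar>walsh (2*m) f lam\<bar>^2 = 2^(2*m)"
      proof (cases "lam = 0")
        case True thus ?thesis using W0 S1 Q2 by simp
      next
        case False
        then obtain u0 where "walsh (2*m) f lam = 1 - ?S + ?Q * chi (f u0)" using Wl by blast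
        hence "\<bar>walsh (2*m) f lam\<bar> = ?Q" using S1 by (simp add: abs_mult chi_abs)
        thus ?thesis using Q2 by simp
      qed
    qed
  qed
qed

lemma xi_nz: "\<xi> \<noteq> 0" using xi_U U_nz by blast
lemma xi_M: "\<xi>^(q+1) = 1" using xi_U by (simp add: U_iff)

lemma xi_pow_mod: "\<xi>^j = \<xi>^(j mod (q+1))"
proof -
  have "\<xi>^j = \<xi>^((q+1) * (j div (q+1)) + j mod (q+1))" by (simp only: mult_div_mod_eq)
  also have "\<dots> = (\<xi>^(q+1))^(j div (q+1)) * \<xi>^(j mod (q+1))" by (simp only: power_add power_mult)
  finally show ?thesis using xi_M by simp
qed

lemma U_img: "unitU m = (\<lambda>j. \<xi>^j) ` {..<q+1}"
proof
  show "(\<lambda>j. \<xi>^j) ` {..<q+1} \<subseteq> unitU m" using xi_U U_power by auto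
  show "unitU m \<subseteq> (\<lambda>j. \<xi>^j) ` {..<q+1}"
  proof
    fix x :: 'a assume "x \<in> unitU m"
    then obtain j where "x = \<xi>^j" using xi_gen by blast
    hence "x = \<xi>^(j mod (q+1))" using xi_pow_mod by simp
    thus "x \<in> (\<lambda>j. \<xi>^j) ` {..<q+1}" by auto
  qed
qed

lemma xi_inj: "inj_on (\<lambda>j. \<xi>^j) {..<q+1}"
  by (rule eq_card_imp_inj_on) (use U_img card_U in auto)

lemma xi_eq: "\<xi>^i = \<xi>^j \<longleftrightarrow> i mod (q+1) = j mod (q+1)"
proof
  assume "\<xi>^i = \<xi>^j"
  hence "\<xi>^(i mod (q+1)) = \<xi>^(j mod (q+1))" using xi_pow_mod by metis
  thus "i mod (q+1) = j mod (q+1)" using inj_onD[OF xi_inj] by simp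
next
  assume "i mod (q+1) = j mod (q+1)"
  thus "\<xi>^i = \<xi>^j" using xi_pow_mod by metis
qed

lemma powi_U: assumes "(u::'a) \<in> unitU m" shows "u powi e = u^(nat (e mod int (q+1)))"
proof -
  let ?M = "int (q+1)"
  have u0: "u \<noteq> 0" using assms U_nz by blast
  have "u powi e = u powi (?M * (e div ?M) + e mod ?M)" by (simp only: mult_div_mod_eq)
  also have "\<dots> = (u powi ?M) powi (e div ?M) * u powi (e mod ?M)"
    using u0 by (simp only: power_int_add[of u] power_int_mult[symmetric] simp_thms)
  also have "u powi ?M = 1" using assms U_iff power_int_of_nat by metis
  also have "e mod ?M = int (nat (e mod ?M))"
  proof -
    have "?M > 0" by (simp only: of_nat_0_less_iff)
    hence "e mod ?M \<ge> 0" by (rule pos_mod_sign)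
    thus ?thesis by simp
  qed
  finally show ?thesis by (simp only: power_int_of_nat power_int_1_left mult_1)
qed

lemma powi_U_mem: "(u::'a) \<in> unitU m \<Longrightarrow> u powi e \<in> unitU m"
  by (simp add: powi_U U_power)

lemma Mpos: "int (q+1) > 0" by (simp only: of_nat_0_less_iff)

lemma nat_mod_lt: "nat (e mod int (q+1)) < q+1"
proof -
  have a: "e mod int (q+1) < int (q+1)" by (rule pos_mod_bound[OF Mpos])
  have b: "e mod int (q+1) \<ge> 0" by (rule pos_mod_sign[OF Mpos])
  show ?thesis using nat_less_iff[OF b, of "q+1"] a by blast
qed

lemma xiE_eq: "\<xi> powi e = \<xi> powi e' \<longleftrightarrow> e mod int (q+1) = e' mod int (q+1)"
proof -
  have "\<xi> powi e = \<xi> powi e' \<longleftrightarrow> \<xi>^(nat (e mod int (q+1))) = \<xi>^(nat (e' mod int (q+1)))"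
    by (simp add: powi_U[OF xi_U])
  also have "\<dots> \<longleftrightarrow> nat (e mod int (q+1)) mod (q+1) = nat (e' mod int (q+1)) mod (q+1)"
    by (rule xi_eq)
  also have "\<dots> \<longleftrightarrow> nat (e mod int (q+1)) = nat (e' mod int (q+1))"
  proof -
    have "nat (e mod int (q+1)) < q+1" "nat (e' mod int (q+1)) < q+1" by (rule nat_mod_lt)+
    thus ?thesis by simp
  qed
  also have "\<dots> \<longleftrightarrow> e mod int (q+1) = e' mod int (q+1)"
    by (rule eq_nat_nat_iff) (rule pos_mod_sign[OF Mpos])+
  finally show ?thesis .
qed

lemma card_R: assumes "r dvd q + 1" "r > 0"
  shows "card {x\<in>unitU m. (x::'a)^r = 1} = r"
proof -
  obtain N where N: "q + 1 = r * N" using assms by (auto elim: dvdE)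
  have N0: "N > 0" using N by (cases N) auto
  have R: "{x\<in>unitU m. x^r = 1} = (\<lambda>i. \<xi>^(N*i)) ` {..<r}"
  proof
    show "(\<lambda>i. \<xi>^(N*i)) ` {..<r} \<subseteq> {x\<in>unitU m. x^r = 1}"
    proof
      fix x :: 'a assume "x \<in> (\<lambda>i. \<xi>^(N*i)) ` {..<r}"
      then obtain i where x: "x = \<xi>^(N*i)" by auto
      have e: "(N*i)*r = (q+1)*i" using N by (simp add: mult_ac)
      have "x^r = \<xi>^((N*i)*r)" by (simp only: x power_mult)
      also have "\<dots> = \<xi>^((q+1)*i)" by (simp only: e)
      also have "\<dots> = (\<xi>^(q+1))^i" by (rule power_mult)
      finally have "x^r = (\<xi>^(q+1))^i" .
      thus "x \<in> {x\<in>unitU m. x^r = 1}" using x xi_M xi_U U_power by simp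
    qed
    show "{x\<in>unitU m. x^r = 1} \<subseteq> (\<lambda>i. \<xi>^(N*i)) ` {..<r}"
    proof
      fix x :: 'a assume x: "x \<in> {x\<in>unitU m. x^r = 1}"
      then obtain j where j: "j < q+1" "x = \<xi>^j" using U_img by auto
      have "\<xi>^(j*r) = \<xi>^0" using x j by (simp add: power_mult)
      hence "(j*r) mod (q+1) = 0 mod (q+1)" by (simp only: xi_eq)
      hence "(j*r) mod (q+1) = 0" by simp
      hence "r * N dvd j * r" using N by auto
      hence "N dvd j" using assms(2) by (simp add: mult.commute)
      then obtain i where i: "j = N * i" by (auto elim: dvdE)
      have "i < r" using j(1) N i by (metis mult_less_cancel1 mult.commute)
      thus "x \<in> (\<lambda>i. \<xi>^(N*i)) ` {..<r}" using i j by auto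
    qed
  qed
  have "inj_on (\<lambda>i. \<xi>^(N*i)) {..<r}"
  proof (rule inj_onI)
    fix i i' assume "i \<in> {..<r}" "i' \<in> {..<r}" "\<xi>^(N*i) = \<xi>^(N*i')"
    moreover have "N*i < q+1" "N*i' < q+1" using calculation N N0 by (auto simp: mult.commute)
    ultimately have "N*i = N*i'" using inj_onD[OF xi_inj, of "N*i" "N*i'"] by simp
    thus "i = i'" using N by auto
  qed
  thus ?thesis using R card_image by fastforce
qed

lemma sum01: "finite I \<Longrightarrow> (\<And>i. i \<in> I \<Longrightarrow> g i = 0 \<or> g i = (1::'a)) \<Longrightarrow> sum g I = 0 \<or> sum g I = 1"
proof -
  assume fin: "finite I" and g: "\<And>i. i \<in> I \<Longrightarrow> g i = 0 \<or> g i = (1::'a)"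
  have "(sum g I)^(2^1) = (\<Sum>i\<in>I. (g i)^(2^1))" by (rule sum_pow2k[OF fin])
  also have "\<dots> = sum g I"
  proof (rule sum.cong[OF refl])
    fix i assume "i \<in> I"
    hence "g i = 0 \<or> g i = 1" by (rule g)
    thus "g i^(2^1) = g i" by auto
  qed
  finally show ?thesis by (intro idem) simp
qed

lemma sum_tr01: "finite I \<Longrightarrow> (\<Sum>i\<in>I. tr (2*m) (h i)) = 0 \<or> (\<Sum>i\<in>I. tr (2*m) (h i)) = (1::'a)"
  by (rule sum01) (simp_all add: tr_full)

lemma fval_f: "fun_f m r s a x = 0 \<or> fun_f m r s a x = (1::'a)"
proof (cases "x = 0")
  case True thus ?thesis by (simp add: fun_f_def)
next
  case False
  thus ?thesis unfolding fun_f_def using sum_tr01[of "{1..(2 ^ m + 1) div r - 1}"] by simp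
qed

lemma cint: "((2::int)^m - 1) = int (q - 1)" using q_ge2 by (simp add: of_nat_diff)

lemma Fs_pow: assumes "y \<in> Fs" shows "(y::'a)^(q-1) = 1"
proof -
  have "y * y^(q-1) = y^(Suc (q-1))" by (rule power_Suc[symmetric])
  also have "Suc (q-1) = q" using q_ge2 by simp
  also have "y^q = y" using assms by (simp add: F_iff)
  finally show ?thesis using assms by simp
qed

lemma f_powi: "(x::'a) powi ((e::int) * (2^m - 1)) = (x^(q-1)) powi e"
proof -
  have "x powi (e * (2^m - 1)) = x powi (int (q-1) * e)" by (simp only: cint mult.commute)
  also have "\<dots> = (x^(q-1)) powi e" by (simp only: power_int_mult power_int_of_nat)
  finally show ?thesis .
qed

lemma fhom_f: assumes y: "y \<in> Fs" and u: "u \<in> unitU m"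
  shows "fun_f m r s a (y * u) = fun_f m r s (a::'a) u"
proof -
  have "y \<noteq> 0" "u \<noteq> 0" using y u U_nz by auto
  hence "y * u \<noteq> 0" by simp
  moreover have "(y*u)^(q-1) = u^(q-1)" using Fs_pow[OF y] by (simp add: power_mult_distrib)
  ultimately show ?thesis using \<open>u \<noteq> 0\<close> by (simp add: fun_f_def f_powi)
qed

lemma G_formula: assumes w: "w \<in> unitU m" and r: "r > 0" "r dvd q + 1"
  shows "(\<Sum>i=1..(q + 1) div r - 1. tr (2*m) ((a::'a) * w powi (int r * int i + s)))
    = (if w^r = 1 then 0 else tr (2*m) (a * w powi s))"
proof -
  obtain N where N: "q + 1 = r * N" using r by (auto elim: dvdE)
  have Nd: "(q+1) div r = N" using N r by simp
  have N0: "N \<ge> 1" using N by (cases N) auto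
  have w0: "w \<noteq> 0" using w U_nz by auto
  let ?z = "w^r"
  have "?z^N = w^(q+1)" by (simp only: N power_mult)
  hence zN: "?z^N = 1" using w U_iff by simp
  have "(\<Sum>i=1..N - 1. tr (2*m) (a * w powi (int r * int i + s)))
      = (\<Sum>i=1..N - 1. tr (2*m) (a * w powi s * ?z^i))"
  proof (rule sum.cong)
    fix i assume "i \<in> {1..N-1}"
    have "w powi (int r * int i + s) = w powi (int r * int i) * w powi s"
      using w0 by (simp add: power_int_add)
    also have "w powi (int r * int i) = ?z^i"
      by (simp only: of_nat_mult[symmetric] power_int_of_nat power_mult)
    finally show "tr (2*m) (a * w powi (int r * int i + s)) = tr (2*m) (a * w powi s * ?z^i)"
      by (simp add: mult_ac)
  qed simp
  also have "\<dots> = tr (2*m) (a * w powi s * (\<Sum>i=1..N - 1. ?z^i))"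
    by (simp add: tr_sum sum_distrib_left)
  also have "(\<Sum>i=1..N - 1. ?z^i) = (if ?z = 1 then 0 else 1)"
  proof (cases "?z = 1")
    case True
    have "odd (q+1)" using m_pos by simp
    hence "odd (r*N)" using N by metis
    hence "odd N" by simp
    then obtain k where "N - 1 = 2*k" using N0 by (metis odd_two_times_div_two_nat)
    hence "(\<Sum>i=1..N - 1. ?z^i) = of_nat (2*k)" using True by simp
    also have "\<dots> = 0" by (simp add: two_zero)
    finally show ?thesis using True by simp
  next
    case False
    have "(\<Sum>i<N. ?z^i) = (?z^N - 1) / (?z - 1)" by (rule geometric_sum[OF False])
    hence s0: "(\<Sum>i<N. ?z^i) = 0" using zN by simp
    have "{..<N} = insert 0 {1..N-1}" using N0 by auto
    hence "(\<Sum>i<N. ?z^i) = 1 + (\<Sum>i=1..N - 1. ?z^i)" by simp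
    hence "(\<Sum>i=1..N - 1. ?z^i) = -1" using s0 by (simp add: add_eq_0_iff)
    thus ?thesis using False by simp
  qed
  finally show ?thesis using Nd by simp
qed

lemma f_on_U: assumes u: "u \<in> unitU m" and r: "r > 0" "r dvd q + 1"
  shows "fun_f m r s (a::'a) u = (if (u^(q-1))^r = 1 then 0 else tr (2*m) (a * (u^(q-1)) powi s))"
proof -
  have "u \<noteq> 0" using u U_nz by auto
  hence "fun_f m r s a u = (\<Sum>i=1..(q + 1) div r - 1. tr (2*m) (a * (u^(q-1)) powi (int r * int i + s)))"
    by (simp add: fun_f_def f_powi)
  also have "\<dots> = (if (u^(q-1))^r = 1 then 0 else tr (2*m) (a * (u^(q-1)) powi s))"
    by (rule G_formula[OF U_power[OF u] r])
  finally show ?thesis .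
qed

lemma pow_bij: "bij_betw (\<lambda>u. u^(q-1)) (unitU m) (unitU m :: 'a set)"
proof -
  have inj: "inj_on (\<lambda>u. u^(q-1)) (unitU m :: 'a set)"
  proof (rule inj_onI)
    fix u v :: 'a assume u: "u \<in> unitU m" and v: "v \<in> unitU m" and e: "u^(q-1) = v^(q-1)"
    define z where "z = u * inverse v"
    have v0: "v \<noteq> 0" using v U_nz by auto
    have zU: "z \<in> unitU m" using u v by (simp add: z_def U_mult U_inverse)
    have z1: "z^(q-1) = 1" using e v0 by (simp add: z_def power_mult_distrib power_inverse)
    have "z^(q+1) = z^(q-1) * z^2" using q_ge2 by (simp add: power_add[symmetric])
    hence "z^2 = 1" using zU z1 by (simp add: U_iff)
    hence "z = 1" by (rule sq_eq_one)
    thus "u = v" using v0 by (simp add: z_def field_simps)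
  qed
  moreover have "(\<lambda>u. u^(q-1)) ` (unitU m :: 'a set) = unitU m"
    by (rule endo_inj_surj[OF _ _ inj]) (auto intro: U_power)
  ultimately show ?thesis by (simp add: bij_betw_def)
qed

abbreviation Rset :: "nat \<Rightarrow> 'a set" where "Rset r \<equiv> {x\<in>unitU m. x^r = 1}"

lemma Sf_fun_f: assumes r: "r > 0" "r dvd q + 1"
  shows "Sf (fun_f m r s (a::'a)) = int r + (\<Sum>x\<in>unitU m. chi (tr (2*m) (a * x powi s)))
           - (\<Sum>x\<in>Rset r. chi (tr (2*m) (a * x powi s)))"
proof -
  let ?h = "\<lambda>x. chi (tr (2*m) (a * x powi s))"
  have "Sf (fun_f m r s a) = (\<Sum>u\<in>unitU m. chi (if (u^(q-1))^r = 1 then 0 else tr (2*m) (a * (u^(q-1)) powi s)))"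
    unfolding Sf_def by (intro sum.cong) (auto simp: f_on_U[OF _ r])
  also have "\<dots> = (\<Sum>w\<in>unitU m. chi (if w^r = 1 then 0 else tr (2*m) (a * w powi s)))"
    using sum.reindex_bij_betw[OF pow_bij, of "\<lambda>w. chi (if w^r = 1 then 0 else tr (2*m) (a * w powi s))"] by simp
  also have "\<dots> = (\<Sum>w\<in>unitU m. if w^r = 1 then 1 else ?h w)"
    by (intro sum.cong) auto
  also have "\<dots> = (\<Sum>w\<in>(unitU m :: 'a set) \<inter> {w. w^r = 1}. 1) + (\<Sum>w\<in>unitU m \<inter> - {w. w^r = 1}. ?h w)"
    by (rule sum.If_cases[where P="\<lambda>w. w^r = 1" and h="\<lambda>w. 1" and g="?h"]) simp
  also have "(\<Sum>w\<in>(unitU m :: 'a set) \<inter> {w. w^r = 1}. (1::int)) = int r"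
    using card_R[OF r(2) r(1)] by (simp add: Int_def)
  also have "(\<Sum>w\<in>unitU m \<inter> - {w. w^r = 1}. ?h w) = (\<Sum>w\<in>unitU m. ?h w) - (\<Sum>w\<in>Rset r. ?h w)"
  proof -
    have "(\<Sum>w\<in>unitU m. ?h w) = (\<Sum>w\<in>unitU m. if w^r = 1 then ?h w else ?h w)" by simp
    also have "\<dots> = (\<Sum>w\<in>unitU m \<inter> {w. w^r = 1}. ?h w) + (\<Sum>w\<in>unitU m \<inter> - {w. w^r = 1}. ?h w)"
      by (rule sum.If_cases[where P="\<lambda>w. w^r = 1" and h="?h" and g="?h"]) simp
    also have "unitU m \<inter> {w. w^r = 1} = Rset r" by auto
    finally show ?thesis by simp
  qed
  finally show ?thesis by simp
qed

lemma bent_fun_f: assumes r: "r > 0" "r dvd q + 1"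
  shows "bent (2*m) (fun_f m r s (a::'a)) \<longleftrightarrow>
    (\<Sum>x\<in>unitU m. chi (tr (2*m) (a * x powi s))) = (\<Sum>x\<in>Rset r. chi (tr (2*m) (a * x powi s))) + 1 - int r"
proof -
  have f1: "fun_f m r s a 1 = 0" using f_on_U[OF U_1 r, of s a] by simp
  have "bent (2*m) (fun_f m r s a) \<longleftrightarrow> Sf (fun_f m r s a) = 1"
    by (rule bent_iff[OF _ fhom_f fval_f f1]) (simp_all add: fun_f_def)
  thus ?thesis using Sf_fun_f[OF r, of s a] by linarith
qed

end

lemma sum_periodic: "(\<Sum>j<n*k. g (j mod k)) = int n * (\<Sum>i<k. (g i :: int))"
proof -
  have "(\<Sum>j<n*k. g (j mod k)) = (\<Sum>l<n. \<Sum>j\<in>{l*k..<l*k+k}. g (j mod k))"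
    by (rule sum.nat_group[symmetric])
  also have "\<dots> = (\<Sum>l<n. \<Sum>i<k. g i)"
  proof (rule sum.cong[OF refl])
    fix l
    have "(\<Sum>j\<in>{l*k..<l*k+k}. g (j mod k)) = (\<Sum>j\<in>{0+l*k..<k+l*k}. g (j mod k))" by (simp add: add.commute)
    also have "\<dots> = (\<Sum>i\<in>{0..<k}. g ((i + l*k) mod k))" by (rule sum.shift_bounds_nat_ivl)
    also have "\<dots> = (\<Sum>i\<in>{0..<k}. g i)" by (intro sum.cong) auto
    finally show "(\<Sum>j\<in>{l*k..<l*k+k}. g (j mod k)) = (\<Sum>i<k. g i)" by (simp add: atLeast0LessThan)
  qed
  also have "\<dots> = int n * (\<Sum>i<k. g i)" by simp
  finally show ?thesis .
qed

context ff
begin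

lemma Mi_eq: "(2::int)^m + 1 = int (q+1)" by simp

lemma part2_sum:
  assumes d: "d = nat (gcd s ((2::int)^m + 1))" and k: "k < (q+1) div d"
    and a: "a = ab * \<xi>^(k*d)"
  shows "(\<Sum>x\<in>unitU m. chi (tr (2*m) (a * x powi s)))
     = int d * (\<Sum>x\<in>{\<xi>^(d*j) | j. j < (q+1) div d}. chi (tr (2*m) (ab * x)))"
proof -
  define Mi where "Mi = int (q+1)"
  define D where "D = gcd s Mi"
  have Mi_pos: "Mi > 0" unfolding Mi_def by (rule Mpos)
  have D_pos: "D > 0" unfolding D_def using Mi_pos by simp
  have dD: "int d = D" using d D_pos by (simp add: D_def Mi_def add.commute)
  have "D dvd Mi" by (simp add: D_def)
  then obtain M' where M': "Mi = D * M'" by (auto elim: dvdE)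
  have M'pos: "M' > 0" using M' Mi_pos D_pos by (simp add: zero_less_mult_iff)
  define N where "N = nat M'"
  have NM: "int N = M'" using M'pos by (simp add: N_def)
  have qdN: "q + 1 = d * N"
  proof -
    have "int (q+1) = int (d * N)" using M' dD NM by (simp add: Mi_def)
    thus ?thesis by (simp only: of_nat_eq_iff)
  qed
  have d0: "d > 0" using dD D_pos by simp
  have Nd: "(q+1) div d = N" using qdN d0 by simp
  have "D dvd s" by (simp add: D_def)
  then obtain s' where s': "s = D * s'" by (auto elim: dvdE)
  have cop: "coprime M' s'"
  proof -
    have "D * gcd s' M' = gcd s Mi" using s' M' D_pos by (simp add: gcd_mult_distrib_int[symmetric])
    hence "gcd s' M' = 1" using D_pos Mi_pos by (simp add: D_def)
    thus ?thesis by (simp add: coprime_iff_gcd_eq_1 gcd.commute)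
  qed
  define H where "H i = chi (tr (2*m) (ab * \<xi>^(d*i)))" for i
  define \<phi> where "\<phi> j = nat ((int k + int j * s') mod M')" for j
  have key: "chi (tr (2*m) (a * (\<xi>^j) powi s)) = H (\<phi> j)" for j
  proof -
    define X where "X = int k + int j * s'"
    have "a * (\<xi>^j) powi s = ab * (\<xi> powi (int (k*d)) * \<xi> powi (int j * s))"
    proof -
      have e1: "\<xi>^(k*d) = \<xi> powi (int (k*d))" by (rule power_int_of_nat[symmetric])
      have e2: "(\<xi>^j) powi s = \<xi> powi (int j * s)" by (rule power_int_power)
      show ?thesis by (simp only: a e1 e2 mult.assoc)
    qed
    also have "\<xi> powi (int (k*d)) * \<xi> powi (int j * s) = \<xi> powi (D * X)"
      using xi_nz by (simp add: power_int_add[symmetric] X_def s' dD[symmetric] algebra_simps)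
    also have "\<xi> powi (D * X) = \<xi> powi (D * (X mod M'))"
    proof (subst xiE_eq)
      have "(D * X) mod (D * M') = D * (X mod M')" by (rule mod_mult_mult1)
      moreover have "(D * (X mod M')) mod (D * M') = D * (X mod M')"
        by (simp add: mod_mult_mult1)
      ultimately show "D * X mod int (q + 1) = D * (X mod M') mod int (q + 1)"
        using M' by (simp add: Mi_def)
    qed
    also have "D * (X mod M') = int (d * \<phi> j)"
      using M'pos by (simp add: \<phi>_def X_def dD[symmetric])
    also have "\<xi> powi int (d * \<phi> j) = \<xi>^(d * \<phi> j)" by (rule power_int_of_nat)
    finally show ?thesis by (simp add: H_def)
  qed
  have per: "\<phi> j = \<phi> (j mod N)" for j
  proof -
    have "(int k + int j * s') mod M' = (int k + (int j * s') mod M') mod M'" by (rule mod_add_right_eq[symmetric])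
    also have "(int j * s') mod M' = ((int j mod M') * s') mod M'" by (rule mod_mult_left_eq[symmetric])
    also have "int j mod M' = int (j mod N)" using NM by (simp add: zmod_int)
    also have "(int k + (int (j mod N) * s') mod M') mod M' = (int k + int (j mod N) * s') mod M'" by (rule mod_add_right_eq)
    finally have "(int k + int j * s') mod M' = (int k + int (j mod N) * s') mod M'" .
    thus ?thesis by (simp add: \<phi>_def)
  qed
  have \<phi>lt: "\<phi> j < N" for j
  proof -
    have "(int k + int j * s') mod M' < M'" "(int k + int j * s') mod M' \<ge> 0"
      using M'pos by simp_all
    thus ?thesis using NM by (simp add: \<phi>_def nat_less_iff)
  qed
  have \<phi>inj: "inj_on \<phi> {..<N}"
  proof (rule inj_onI)
    fix i i' assume i: "i \<in> {..<N}" and i': "i' \<in> {..<N}" and e: "\<phi> i = \<phi> i'"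
    have "(int k + int i * s') mod M' = (int k + int i' * s') mod M'"
    proof -
      have "0 \<le> (int k + int i * s') mod M'" "0 \<le> (int k + int i' * s') mod M'"
        by (rule pos_mod_sign[OF M'pos])+
      thus ?thesis using e by (simp add: \<phi>_def)
    qed
    hence "M' dvd (int k + int i * s') - (int k + int i' * s')" by (simp add: mod_eq_dvd_iff)
    hence "M' dvd (int i - int i') * s'" by (simp add: algebra_simps)
    hence "M' dvd int i - int i'" using cop by (simp add: coprime_dvd_mult_left_iff)
    moreover have "int i < M'" "int i' < M'" using i i' NM by auto
    ultimately have "int i - int i' = 0"
    proof -
      assume dv: "M' dvd int i - int i'" and lt: "int i < M'" "int i' < M'"
      show ?thesis
      proof (rule ccontr)
        assume "int i - int i' \<noteq> 0"
        hence "\<bar>M'\<bar> \<le> \<bar>int i - int i'\<bar>" using dv by (rule dvd_imp_le_int)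
        thus False using lt M'pos by linarith
      qed
    qed
    thus "i = i'" by simp
  qed
  have \<phi>img: "\<phi> ` {..<N} = {..<N}"
    by (rule endo_inj_surj[OF _ _ \<phi>inj]) (auto simp: \<phi>lt)
  have "(\<Sum>x\<in>unitU m. chi (tr (2*m) (a * x powi s))) = (\<Sum>j<q+1. chi (tr (2*m) (a * (\<xi>^j) powi s)))"
    unfolding U_img by (rule sum.reindex[OF xi_inj, unfolded comp_def])
  also have "\<dots> = (\<Sum>j<d*N. H (\<phi> (j mod N)))" using qdN by (simp add: key per[symmetric])
  also have "\<dots> = int d * (\<Sum>i<N. H (\<phi> i))" by (rule sum_periodic)
  also have "(\<Sum>i<N. H (\<phi> i)) = (\<Sum>i<N. H i)"
    using sum.reindex[OF \<phi>inj, of H] \<phi>img by simp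
  also have "(\<Sum>i<N. H i) = (\<Sum>x\<in>{\<xi>^(d*j) | j. j < (q+1) div d}. chi (tr (2*m) (ab * x)))"
  proof -
    have img: "{\<xi>^(d*j) | j. j < (q+1) div d} = (\<lambda>j. \<xi>^(d*j)) ` {..<N}" using Nd by auto
    have "inj_on (\<lambda>j. \<xi>^(d*j)) {..<N}"
    proof (rule inj_onI)
      fix i i' assume "i \<in> {..<N}" "i' \<in> {..<N}" "\<xi>^(d*i) = \<xi>^(d*i')"
      moreover have "d*i < q+1" "d*i' < q+1" using calculation qdN d0 by auto
      ultimately have "d*i = d*i'" using inj_onD[OF xi_inj, of "d*i" "d*i'"] by simp
      thus "i = i'" using d0 by simp
    qed
    thus ?thesis unfolding img by (simp add: sum.reindex H_def)
  qed
  finally show ?thesis .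
qed

lemma sum_powi_bij:
  assumes g1: "gcd s ((2::int)^m + 1) = 1" and A: "(A :: 'a set) \<subseteq> unitU m"
    and cl: "\<And>x. x \<in> A \<Longrightarrow> x powi s \<in> A"
  shows "(\<Sum>x\<in>A. h (x powi s)) = (\<Sum>x\<in>A. (h x :: int))"
proof -
  obtain u v where uv: "u * s + v * ((2::int)^m + 1) = 1" using bezout_int[of s "(2::int)^m + 1"] g1 by auto
  have inv: "(x powi s) powi u = x" if x: "x \<in> unitU m" for x :: 'a
  proof -
    have "(u * s) mod ((2::int)^m + 1) = (u * s + v * ((2::int)^m + 1)) mod ((2::int)^m + 1)" by simp
    also have "\<dots> = 1 mod ((2::int)^m + 1)" using uv by simp
    also have "\<dots> = 1" using q_ge2 by simp
    finally have e0: "(u * s) mod ((2::int)^m + 1) = 1" .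
    have "int (q+1) = (2::int)^m + 1" by simp
    hence e: "(s * u) mod int (q+1) = 1" using e0 by (simp only: mult.commute)
    have "(x powi s) powi u = x powi (s * u)" by (rule power_int_mult[symmetric])
    also have "\<dots> = x" using e by (simp add: powi_U[OF x])
    finally show ?thesis .
  qed
  have inj: "inj_on (\<lambda>x. x powi s) A"
  proof (rule inj_onI)
    fix x y assume h: "x \<in> A" "y \<in> A" "x powi s = y powi s"
    have "x = (x powi s) powi u" using inv[of x] h(1) A by auto
    also have "\<dots> = (y powi s) powi u" using h(3) by simp
    also have "\<dots> = y" using inv[of y] h(2) A by auto
    finally show "x = y" .
  qed
  have fin: "finite A" by simp
  have "(\<lambda>x. x powi s) ` A = A" by (rule endo_inj_surj[OF fin _ inj]) (auto intro: cl)
  thus ?thesis using sum.reindex[OF inj, of h] by simp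
qed

lemma sum_mult_U: assumes "(c::'a) \<in> unitU m"
  shows "(\<Sum>x\<in>unitU m. h (c * x)) = (\<Sum>x\<in>unitU m. (h x :: int))"
proof -
  have c0: "c \<noteq> 0" using assms U_nz by auto
  show ?thesis
  proof -
    have i1: "c * (inverse c * a) = a" for a using c0 by (simp add: mult.assoc[symmetric])
    have i2: "inverse c * (c * a) = a" for a using c0 by (simp add: mult.assoc[symmetric])
    have m1: "c * a \<in> unitU m" if "a \<in> unitU m" for a using assms that U_mult by blast
    have m2: "inverse c * a \<in> unitU m" if "a \<in> unitU m" for a using assms that U_mult U_inverse by blast
    show ?thesis
      by (rule sum.reindex_bij_witness[of _ "\<lambda>x. inverse c * x" "\<lambda>x. c * x"]) (simp_all add: i1 i2 m1 m2)
  qed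
qed

lemma psi_mem: assumes u: "u \<in> unitU m" "u \<noteq> 1"
  shows "(u::'a) + inverse u \<in> Fs"
proof -
  have "u + inverse u = u + u^q" using U_conj[OF u(1)] by simp
  hence "u + inverse u \<in> subF m" using F_trace by simp
  moreover have "u + inverse u \<noteq> 0"
  proof
    assume "u + inverse u = 0"
    hence "u = inverse u" by (rule sub_eq_add[THEN iffD2])
    hence "u^2 = 1" using u U_nz by (simp add: power2_eq_square) (metis right_inverse)
    thus False using sq_eq_one u by blast
  qed
  ultimately show ?thesis by simp
qed

lemma fiber: assumes u: "u \<in> unitU m" "u \<noteq> 1"
  shows "{v\<in>unitU m - {1}. v + inverse v = u + inverse u} = {u, inverse (u::'a)}"
proof
  have u0: "u \<noteq> 0" using u U_nz by auto
  show "{v\<in>unitU m - {1}. v + inverse v = u + inverse u} \<subseteq> {u, inverse u}"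
  proof
    fix v assume v: "v \<in> {v\<in>unitU m - {1}. v + inverse v = u + inverse u}"
    have v0: "v \<noteq> 0" using v U_nz by auto
    have "(v + inverse v) * (u * v) = (u + inverse u) * (u * v)" using v by simp
    moreover have "(v + inverse v) * (u * v) = u * v^2 + u" using v0 by (simp add: field_simps power2_eq_square)
    moreover have "(u + inverse u) * (u * v) = u^2 * v + v" using u0 by (simp add: field_simps power2_eq_square)
    ultimately have "u * v^2 + u = u^2 * v + v" by simp
    hence "(u * v^2 + u) + (u^2 * v + v) = 0" by (rule sub_eq_add[THEN iffD1])
    moreover have "(v + u) * (u * v + 1) = (u * v^2 + u) + (u^2 * v + v)"
      by (simp add: algebra_simps power2_eq_square)
    ultimately have "(v + u) * (u * v + 1) = 0" by simp
    hence "v + u = 0 \<or> u * v + 1 = 0" by simp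
    hence "v = u \<or> u * v = 1" using sub_eq_add by blast
    thus "v \<in> {u, inverse u}" using u0 by (auto simp: field_simps)
  qed
  show "{u, inverse u} \<subseteq> {v\<in>unitU m - {1}. v + inverse v = u + inverse u}"
    using u u0 U_inverse by (auto simp: add.commute)
qed

lemma fiber_card: assumes u: "(u::'a) \<in> unitU m" "u \<noteq> 1"
  shows "card {v\<in>unitU m - {1}. v + inverse v = u + inverse u} = 2"
proof -
  have "u \<noteq> inverse (u::'a)"
  proof
    assume "u = inverse u"
    hence "u^2 = 1" using u U_nz by (simp add: power2_eq_square) (metis right_inverse)
    thus False using sq_eq_one u by blast
  qed
  thus ?thesis using fiber[OF u] by simp
qed

lemma fiber_tr: assumes u: "u \<in> unitU m" "u \<noteq> 1"
  shows "tr m (inverse (u + inverse (u::'a))) = 1"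
proof -
  have u0: "u \<noteq> 0" using u U_nz by auto
  have u1: "u + 1 \<noteq> 0" using u sub_eq_add by blast
  define w where "w = u / (u + 1)"
  have sq: "(u+1)^2 = u^2 + 1" by (simp add: sq_add)
  have "inverse (u + inverse u) = u / (u^2 + 1)" using u0 by (simp add: field_simps power2_eq_square)
  also have "\<dots> = w^2 + w"
  proof -
    have "u^2 + u*(u+1) = u"
    proof -
      have "u^2 + u*(u+1) = (u^2 + u^2) + u" by (simp add: algebra_simps power2_eq_square)
      thus ?thesis by simp
    qed
    moreover have "(w^2 + w) * (u+1)^2 = u^2 + u*(u+1)"
    proof -
      have wu: "w * (u+1) = u" using u1 by (simp add: w_def)
      have "(w^2 + w) * (u+1)^2 = (w*(u+1))^2 + (w*(u+1))*(u+1)" by (simp add: algebra_simps power2_eq_square)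
      thus ?thesis by (simp only: wu)
    qed
    ultimately have "(w^2 + w) * (u+1)^2 = u" by simp
    moreover have "(u+1)^2 \<noteq> 0" using u1 by simp
    ultimately have "w^2 + w = u / (u+1)^2" by (simp add: eq_divide_eq)
    thus ?thesis using sq by simp
  qed
  finally have e1: "inverse (u + inverse u) = w^2 + w" .
  have "w^q = u^q / (u + 1)^q" by (simp add: w_def power_divide)
  also have "(u+1)^q = u^q + 1" by (simp add: frob_q)
  also have "u^q = inverse u" using U_conj[OF u(1)] .
  finally have "w^q = inverse u / (inverse u + 1)" .
  also have "\<dots> = 1 / (u + 1)" using u0 u1 by (simp add: field_simps add.commute)
  finally have "w^q + w = 1 / (u+1) + u / (u+1)" by (simp add: w_def)
  also have "\<dots> = 1" using u1 by (simp add: field_simps add.commute)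
  finally have e2: "w^q + w = 1" .
  show ?thesis using e1 e2 tr_telescope by simp
qed

lemma kloost:
  assumes g: "\<gamma> \<in> subF m" "\<gamma> \<noteq> 0"
  shows "(\<Sum>u\<in>unitU m. chi (tr (2*m) (\<gamma> * u))) = 1 - kloosterman m (\<gamma>::'a)"
proof -
  define \<psi> where "\<psi> u = u + inverse u" for u :: 'a
  define gg where "gg t = chi (tr m (\<gamma> * t))" for t :: 'a
  define c where "c t = card {u\<in>unitU m - {1}. \<psi> u = t}" for t
  have a: "tr (2*m) (\<gamma> * u) = tr m (\<gamma> * \<psi> u)" if u: "u \<in> unitU m" for u
  proof -
    have "tr (2*m) ((\<gamma> * u) * 1) = tr m (((\<gamma>*u) + (\<gamma>*u)^q) * 1)" by (rule tr_split[OF F_1])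
    moreover have "(\<gamma>*u)^q = \<gamma> * inverse u" using g U_conj[OF u] by (simp add: power_mult_distrib F_iff)
    ultimately show ?thesis by (simp add: \<psi>_def distrib_left)
  qed
  have img: "\<psi> ` (unitU m - {1}) \<subseteq> Fs"
  proof
    fix t assume "t \<in> \<psi> ` (unitU m - {1})"
    then obtain u where "u \<in> unitU m" "u \<noteq> 1" "t = \<psi> u" by auto
    thus "t \<in> Fs" using psi_mem[of u] by (simp add: \<psi>_def)
  qed
  have "(\<Sum>u\<in>unitU m. chi (tr (2*m) (\<gamma> * u))) = (\<Sum>u\<in>unitU m. gg (\<psi> u))"
    by (intro sum.cong) (auto simp: a gg_def)
  also have "\<dots> = gg (\<psi> 1) + (\<Sum>u\<in>unitU m - {1}. gg (\<psi> u))"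
    using U_1 by (simp add: sum.remove)
  also have "gg (\<psi> 1) = 1" by (simp add: gg_def \<psi>_def)
  also have "(\<Sum>u\<in>unitU m - {1}. gg (\<psi> u)) = (\<Sum>t\<in>Fs. of_nat (c t) * gg t)"
    unfolding c_def by (rule sum_fun_comp[OF _ _ img]) auto
  also have "\<dots> = (\<Sum>t\<in>Fs. (1 - chi (tr m (inverse t))) * gg t)"
  proof -
    define A where "A t = int (c t)" for t
    define B where "B t = 1 - chi (tr m (inverse t))" for t :: 'a
    have AB: "A t \<le> B t" if t: "t \<in> Fs" for t
    proof (cases "c t = 0")
      case True
      have "tr m (inverse t) = 0 \<or> tr m (inverse t) = 1" using t by (intro tr_F F_inverse) auto
      thus ?thesis using True by (auto simp: A_def B_def)
    next
      case False
      then obtain u where u: "u \<in> unitU m - {1}" "\<psi> u = t" unfolding c_def by (metis (mono_tags, lifting) card.empty empty_Collect_eq)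
      have "c t = 2" using fiber_card[of u] u unfolding c_def \<psi>_def by auto
      moreover have "tr m (inverse t) = 1" using fiber_tr[of u] u unfolding \<psi>_def by auto
      ultimately show ?thesis by (simp add: A_def B_def)
    qed
    have sumA: "(\<Sum>t\<in>Fs. A t) = int q"
    proof -
      have "(\<Sum>u\<in>unitU m - {1::'a}. (1::int)) = (\<Sum>t\<in>Fs. of_nat (c t) * 1)"
        unfolding c_def using sum_fun_comp[OF _ _ img, of "\<lambda>_. (1::int)"] by simp
      moreover have "(\<Sum>u\<in>unitU m - {1::'a}. (1::int)) = int q"
        using card_U U_1 by (simp add: card_Diff_singleton)
      ultimately show ?thesis by (simp add: A_def)
    qed
    have sumB: "(\<Sum>t\<in>Fs. B t) = int q"
    proof -
      have "(\<Sum>t\<in>Fs. chi (tr m (inverse t))) = (\<Sum>t\<in>Fs. chi (tr m t))"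
        by (rule sum.reindex_bij_witness[of _ inverse inverse]) (auto intro: F_inverse)
      also have "\<dots> = (\<Sum>t\<in>(subF m :: 'a set). chi (tr m (1 * t))) - chi (tr m (1 * (0::'a)))"
        using F_0 by (simp add: sum_diff1)
      also have "\<dots> = -1" using char_sum_F[OF F_1] by simp
      finally have "(\<Sum>t\<in>Fs. chi (tr m (inverse t))) = -1" .
      moreover have "(\<Sum>t\<in>Fs. (1::int)) = int q - 1" using card_Fs q_ge2 by (simp add: of_nat_diff)
      ultimately show ?thesis by (simp add: B_def sum_subtractf)
    qed
    have "\<forall>t\<in>Fs. B t - A t = 0"
    proof -
      have "(\<Sum>t\<in>Fs. B t - A t) = 0" using sumA sumB by (simp add: sum_subtractf)
      moreover have "\<forall>t\<in>Fs. 0 \<le> B t - A t" using AB by auto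
      ultimately show ?thesis using sum_nonneg_eq_0_iff[of Fs "\<lambda>t. B t - A t"] by simp
    qed
    thus ?thesis by (intro sum.cong) (auto simp: A_def B_def)
  qed
  also have "\<dots> = (\<Sum>t\<in>Fs. gg t) - (\<Sum>t\<in>Fs. chi (tr m (\<gamma> * t + inverse t)))"
  proof -
    have "chi (tr m (inverse t)) * gg t = chi (tr m (\<gamma> * t + inverse t))" if t: "t \<in> Fs" for t
    proof -
      have "tr m (inverse t) = 0 \<or> tr m (inverse t) = 1" using t by (intro tr_F F_inverse) auto
      moreover have "tr m (\<gamma> * t) = 0 \<or> tr m (\<gamma> * t) = 1" using t g by (intro tr_F F_mult) auto
      ultimately show ?thesis by (simp add: gg_def tr_add chi_add mult.commute add.commute)
    qed
    thus ?thesis by (simp add: algebra_simps sum_subtractf)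
  qed
  also have "(\<Sum>t\<in>Fs. gg t) = -1"
  proof -
    have "(\<Sum>t\<in>Fs. gg t) = (\<Sum>t\<in>subF m. gg t) - gg 0" using F_0 by (simp add: sum_diff1)
    thus ?thesis using char_sum_F[OF g(1)] g by (simp add: gg_def)
  qed
  also have "(\<Sum>t\<in>Fs. chi (tr m (\<gamma> * t + inverse t))) = kloosterman m \<gamma> - 1"
    using F_0 by (simp add: kloosterman_def sum_diff1)
  finally show ?thesis by simp
qed

end

theorem theorem4:
  fixes m r :: nat and s :: int and a \<xi> :: "'a::{field,finite}"
  assumes m_pos: "m > 0"
    and card: "card (UNIV :: 'a set) = 2 ^ (2 * m)"
    and r_pos: "r > 0" and r_dvd: "r dvd 2 ^ m + 1"
    and a_nz: "a \<noteq> 0"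
    and xi_U: "\<xi> \<in> unitU m"
    and xi_gen: "\<forall>x\<in>unitU m. \<exists>j::nat. x = \<xi> ^ j"
  shows
    "(\<forall>ab (k::nat). gcd s (2 ^ m + 1) = 1 \<and> ab \<in> subF m \<and> ab \<noteq> 0 \<and> k \<le> 2 ^ m
        \<and> a = ab * \<xi> ^ k \<longrightarrow>
        (bent (2 * m) (fun_f m r s a) \<longleftrightarrow>
          kloosterman m ab = int r - (\<Sum>x\<in>{x\<in>unitU m. x ^ r = 1}. chi (tr (2 * m) (a * x)))))
     \<and>
     (\<forall>d ab (k::nat). d = nat (gcd s (2 ^ m + 1)) \<and> ab \<in> subF m \<and> ab \<noteq> 0
        \<and> k < (2 ^ m + 1) div d \<and> a = ab * \<xi> ^ (k * d) \<longrightarrow>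
        (bent (2 * m) (fun_f m r s a) \<longleftrightarrow>
          int d * (\<Sum>x\<in>{\<xi> ^ (d * j) | j. j < (2 ^ m + 1) div d}. chi (tr (2 * m) (ab * x)))
          = (\<Sum>x\<in>{x\<in>unitU m. x ^ r = 1}. chi (tr (2 * m) (a * x powi s))) + 1 - int r))"
proof -
  interpret ff m \<xi> using m_pos card xi_U xi_gen by unfold_locales
  have Bt: "bent (2*m) (fun_f m r s a) \<longleftrightarrow>
    (\<Sum>x\<in>unitU m. chi (tr (2*m) (a * x powi s))) = (\<Sum>x\<in>Rset r. chi (tr (2*m) (a * x powi s))) + 1 - int r"
    by (rule bent_fun_f[OF r_pos r_dvd])
  show ?thesis
  proof (intro conjI allI impI)
    fix ab and k :: nat
    assume h: "gcd s (2 ^ m + 1) = 1 \<and> ab \<in> subF m \<and> ab \<noteq> 0 \<and> k \<le> 2 ^ m \<and> a = ab * \<xi> ^ k"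
    have g1: "gcd s ((2::int)^m + 1) = 1" using h by simp
    have clU: "x powi s \<in> unitU m" if "x \<in> unitU m" for x :: 'a using that by (rule powi_U_mem)
    have clR: "x powi s \<in> Rset r" if x: "x \<in> Rset r" for x :: 'a
    proof -
      have "(x powi s)^r = x powi (s * int r)" by (rule power_int_power')
      also have "\<dots> = (x^r) powi s" by (simp add: power_int_power mult.commute)
      also have "\<dots> = 1" using x by simp
      finally show ?thesis using x powi_U_mem by auto
    qed
    have s1: "(\<Sum>x\<in>unitU m. chi (tr (2*m) (a * x powi s))) = (\<Sum>x\<in>unitU m. chi (tr (2*m) (a * x)))"
      by (rule sum_powi_bij[OF g1 subset_refl clU, of "\<lambda>y. chi (tr (2*m) (a * y))"])
    have s2: "(\<Sum>x\<in>Rset r. chi (tr (2*m) (a * x powi s))) = (\<Sum>x\<in>Rset r. chi (tr (2*m) (a * x)))"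
      by (rule sum_powi_bij[OF g1 _ clR, of "\<lambda>y. chi (tr (2*m) (a * y))"]) auto
    have s3: "(\<Sum>x\<in>unitU m. chi (tr (2*m) (a * x))) = 1 - kloosterman m ab"
    proof -
      have "(\<Sum>x\<in>unitU m. chi (tr (2*m) (a * x))) = (\<Sum>x\<in>unitU m. chi (tr (2*m) (ab * (\<xi>^k * x))))"
        using h by (simp add: mult.assoc)
      also have "\<dots> = (\<Sum>x\<in>unitU m. chi (tr (2*m) (ab * x)))"
        by (rule sum_mult_U[OF U_power[OF xi_U], of "\<lambda>y. chi (tr (2*m) (ab * y))"])
      also have "\<dots> = 1 - kloosterman m ab" using h by (intro kloost) auto
      finally show ?thesis .
    qed
    show "bent (2 * m) (fun_f m r s a) \<longleftrightarrow>
          kloosterman m ab = int r - (\<Sum>x\<in>{x\<in>unitU m. x ^ r = 1}. chi (tr (2 * m) (a * x)))"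
      unfolding Bt s1 s2 s3 by linarith
  next
    fix d ab and k :: nat
    assume h: "d = nat (gcd s (2 ^ m + 1)) \<and> ab \<in> subF m \<and> ab \<noteq> 0
        \<and> k < (2 ^ m + 1) div d \<and> a = ab * \<xi> ^ (k * d)"
    have P: "(\<Sum>x\<in>unitU m. chi (tr (2*m) (a * x powi s)))
     = int d * (\<Sum>x\<in>{\<xi>^(d*j) | j. j < (q+1) div d}. chi (tr (2*m) (ab * x)))"
      by (rule part2_sum) (use h in auto)
    show "bent (2 * m) (fun_f m r s a) \<longleftrightarrow>
          int d * (\<Sum>x\<in>{\<xi> ^ (d * j) | j. j < (2 ^ m + 1) div d}. chi (tr (2 * m) (ab * x)))
          = (\<Sum>x\<in>{x\<in>unitU m. x ^ r = 1}. chi (tr (2 * m) (a * x powi s))) + 1 - int r"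
      unfolding Bt P by simp
  qed
qed

end
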